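(* Let $\mathcal{P}_f$ be a (latent) distribution over functions $f:\mathbb{R}^{n_x}\to\mathbb{R}$, $\mathcal{X}\subset\mathbb{R}^{n_x}$, and $\mathcal{P}_x$ a (latent) distribution on $\mathcal{X}$. Fix $\theta,\phi$, a prior mean function $m_\theta:\mathbb{R}^{n_x}\to\mathbb{R}$, a positive semidefinite prior covariance function $k_\phi:\mathbb{R}^{n_x}\times\mathbb{R}^{n_x}\to\mathbb{R}_{>0}$, a constant $q>0$, and an algorithm $\mathcal{ALG}$ mapping $(m_\theta,k_\phi,\mathcal{D})$ to a posterior mean function and posterior standard deviation function. Let $f^1,\dots,f^n$ be i.i.d. from $\mathcal{P}_f$; for each $i$ let $\mathcal{D}^i_{tr}\sim\mathcal{P}_{\mathcal{D}^i_{tr}\mid f^i}$ be a training dataset of noiseless observations of $f^i$, and $(\mu^i_{\theta,\phi},\sigma^i_\phi)=\mathcal{ALG}(m_\theta,k_\phi,\mathcal{D}^i_{tr})$; and let $x^i_1,\dots,x^i_{t^i_{eval}}$ be i.i.d. from $\mathcal{P}_x$. Define $\mathcal{I}_{\theta,\phi}(x)=[m_\theta(x)-q\sqrt{k_\phi(x,x)},m_\theta(x)+q\sqrt{k_\phi(x,x)}]$, $\mathcal{I}^i_{\theta,\phi}(x)=[\mu^i_{\theta,\phi}(x)-q\sigma^i_\phi(x),\mu^i_{\theta,\phi}(x)+q\sigma^i_\phi(x)]$, $c^i_1(x)=\mathbf{1}[f^i(x)\in\mathcal{I}_{\theta,\phi}(x)]$, $c^i_2(x)=\mathbf{1}[f^i(x)\in\mathcal{I}^i_{\theta,\phi}(x)]$,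 and for $j\in\{1,2\}$ $$C_j=\mathbb{E}_{f^i,x}[c^i_j(x)],\qquad \hat C^i_j=\frac{1}{t^i_{eval}}\sum_{t=1}^{t^i_{eval}}c^i_j(x^i_t).$$ Then for any $\gamma\in(0,0.5]$, each of the following holds with probability at least $1-2\gamma$: $$C_1\geqslant\frac{1}{n}\sum_{i=1}^n\hat C^i_1-\sqrt{\frac{\log(2/\gamma)\sum_{i=1}^n\frac{1}{t^i_{eval}}}{2n^2}}-\sqrt{\frac{\log(2/\gamma)}{2n}},$$ $$C_2\geqslant\frac{1}{n}\sum_{i=1}^n\hat C^i_2-\sqrt{\frac{\log(2/\gamma)\sum_{i=1}^n\frac{1}{t^i_{eval}}}{2n^2}}-\sqrt{\frac{\log(2/\gamma)}{2n}}.$$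
   Context: $\mathbb{E}_{f^i,x}$ denotes expectation with respect to the joint measure of a function $f^i\sim\mathcal{P}_f$ (with its training data and hence posterior generated from it) and an input $x\sim\mathcal{P}_x$; thus $C_1=P_{f^i,x}(f^i(x)\in\mathcal{I}_{\theta,\phi}(x))$ and $C_2=P_{f^i,x}(f^i(x)\in\mathcal{I}^i_{\theta,\phi}(x))$. The probability "with probability at least $1-2\gamma$" is over the random draw of $f^1,\dots,f^n$, their training datasets, and the evaluation inputs $x^i_t$. $\mathbf{1}[\mathcal{E}]$ is the indicator of the event $\mathcal{E}$. *)

theory Defs
  imports "HOL-Probability.Probability"
begin

type_synonym 'n dataset = "((real^'n) \<times> real) list"

definition psd_kernel :: "('a \<Rightarrow> 'a \<Rightarrow> real) \<Rightarrow> bool" where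
  "psd_kernel k \<longleftrightarrow> (\<forall>x y. k x y = k y x) \<and>
     (\<forall>(xs::'a list) (a::nat \<Rightarrow> real).
        (\<Sum>i<length xs. \<Sum>j<length xs. a i * a j * k (xs!i) (xs!j)) \<ge> 0)"

definition prior_interval ::
  "('x \<Rightarrow> real) \<Rightarrow> ('x \<Rightarrow> 'x \<Rightarrow> real) \<Rightarrow> real \<Rightarrow> 'x \<Rightarrow> real set" where
  "prior_interval m k q x = {m x - q * sqrt (k x x) .. m x + q * sqrt (k x x)}"

definition post_interval ::
  "(('x \<Rightarrow> real) \<Rightarrow> ('x \<Rightarrow> 'x \<Rightarrow> real) \<Rightarrow> 'd \<Rightarrow> ('x \<Rightarrow> real) \<times> ('x \<Rightarrow> real))
   \<Rightarrow> ('x \<Rightarrow> real) \<Rightarrow> ('x \<Rightarrow> 'x \<Rightarrow> real) \<Rightarrow> real \<Rightarrow> 'd \<Rightarrow> 'x \<Rightarrow> real set" where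
  "post_interval alg m k q D x =
     (let \<mu> = fst (alg m k D); \<sigma> = snd (alg m k D)
      in {\<mu> x - q * \<sigma> x .. \<mu> x + q * \<sigma> x})"

definition c1 :: "('x \<Rightarrow> real) \<Rightarrow> ('x \<Rightarrow> 'x \<Rightarrow> real) \<Rightarrow> real
     \<Rightarrow> ('x \<Rightarrow> real) \<times> 'd \<Rightarrow> 'x \<Rightarrow> bool" where
  "c1 m k q fD x \<longleftrightarrow> fst fD x \<in> prior_interval m k q x"

definition c2 :: "(('x \<Rightarrow> real) \<Rightarrow> ('x \<Rightarrow> 'x \<Rightarrow> real) \<Rightarrow> 'd \<Rightarrow> ('x \<Rightarrow> real) \<times> ('x \<Rightarrow> real))
     \<Rightarrow> ('x \<Rightarrow> real) \<Rightarrow> ('x \<Rightarrow> 'x \<Rightarrow> real) \<Rightarrow> real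
     \<Rightarrow> ('x \<Rightarrow> real) \<times> 'd \<Rightarrow> 'x \<Rightarrow> bool" where
  "c2 alg m k q fD x \<longleftrightarrow> fst fD x \<in> post_interval alg m k q (snd fD) x"

definition joint_law :: "'f measure \<Rightarrow> ('f \<Rightarrow> 'd measure) \<Rightarrow> 'd measure \<Rightarrow> ('f \<times> 'd) measure" where
  "joint_law Pf Pd Dm = Pf \<bind> (\<lambda>f. distr (Pd f) (Pf \<Otimes>\<^sub>M Dm) (\<lambda>D. (f, D)))"

definition coverage :: "'a measure \<Rightarrow> 'x measure \<Rightarrow> ('a \<Rightarrow> 'x \<Rightarrow> bool) \<Rightarrow> real" where
  "coverage J Px c = measure (J \<Otimes>\<^sub>M Px) {p \<in> space (J \<Otimes>\<^sub>M Px). c (fst p) (snd p)}"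

text \<open>Sample space: for each task i < n, an independent draw of (f^i, D^i) from the
  joint law together with t^i_eval i.i.d. inputs from Px.\<close>
definition sample_space :: "nat \<Rightarrow> (nat \<Rightarrow> nat) \<Rightarrow> 'a measure \<Rightarrow> 'x measure
     \<Rightarrow> (nat \<Rightarrow> 'a \<times> (nat \<Rightarrow> 'x)) measure" where
  "sample_space n T J Px = (\<Pi>\<^sub>M i\<in>{..<n}. J \<Otimes>\<^sub>M (\<Pi>\<^sub>M t\<in>{..<T i}. Px))"

definition emp_avg :: "nat \<Rightarrow> (nat \<Rightarrow> nat) \<Rightarrow> ('a \<Rightarrow> 'x \<Rightarrow> bool)
     \<Rightarrow> (nat \<Rightarrow> 'a \<times> (nat \<Rightarrow> 'x)) \<Rightarrow> real" where
  "emp_avg n T c \<omega> = (1 / real n) * (\<Sum>i<n. (1 / real (T i)) *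
       (\<Sum>t<T i. of_bool (c (fst (\<omega> i)) (snd (\<omega> i) t))))"

definition conf_bound :: "nat \<Rightarrow> (nat \<Rightarrow> nat) \<Rightarrow> real \<Rightarrow> real" where
  "conf_bound n T \<gamma> =
     sqrt (ln (2 / \<gamma>) * (\<Sum>i<n. 1 / real (T i)) / (2 * (real n)\<^sup>2))
     + sqrt (ln (2 / \<gamma>) / (2 * real n))"

end

theory Submission
  imports Defs
begin


lemma joint_prob:
  assumes Pf: "prob_space Pf"
    and Pd_kernel: "Pd \<in> Pf \<rightarrow>\<^sub>M subprob_algebra Dm"
    and Pd_prob: "\<And>f. f \<in> space Pf \<Longrightarrow> prob_space (Pd f)"
  shows "prob_space (joint_law Pf Pd Dm)"
proof -
  interpret prob_space Pf by fact
  have K: "(\<lambda>f. distr (Pd f) (Pf \<Otimes>\<^sub>M Dm) (Pair f)) \<in> Pf \<rightarrow>\<^sub>M subprob_algebra (Pf \<Otimes>\<^sub>M Dm)"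
    by (rule measurable_distr2[OF _ Pd_kernel]) simp
  show ?thesis unfolding joint_law_def
  proof (rule prob_space_bind[OF _ K])
    show "AE f in Pf. prob_space (distr (Pd f) (Pf \<Otimes>\<^sub>M Dm) (Pair f))"
    proof (rule AE_I2)
      fix f assume f: "f \<in> space Pf"
      have s: "sets (Pd f) = sets Dm" using Pd_kernel f by (rule subprob_measurableD)
      show "prob_space (distr (Pd f) (Pf \<Otimes>\<^sub>M Dm) (Pair f))"
        by (rule prob_space.prob_space_distr[OF Pd_prob[OF f]])
           (simp add: measurable_cong_sets[OF s refl] f)
    qed
  qed
qed

lemma comp_distr:
  fixes J :: "'a measure" and Px :: "'x measure"
  assumes J: "prob_space J" and Px: "prob_space Px" and t: "t < T"
  shows "distr (J \<Otimes>\<^sub>M (\<Pi>\<^sub>M t\<in>{..<T}. Px)) (J \<Otimes>\<^sub>M Px) (\<lambda>p. (fst p, snd p t)) = J \<Otimes>\<^sub>M Px"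
proof -
  interpret Px: prob_space Px by fact
  have d: "distr (\<Pi>\<^sub>M t\<in>{..<T}. Px) Px (\<lambda>xs. xs t) = Px"
    using distr_PiM_component[of "{..<T}" "\<lambda>_. Px" t] Px t by simp
  have "distr J J (\<lambda>x. x) \<Otimes>\<^sub>M distr (\<Pi>\<^sub>M t\<in>{..<T}. Px) Px (\<lambda>xs. xs t)
     = distr (J \<Otimes>\<^sub>M (\<Pi>\<^sub>M t\<in>{..<T}. Px)) (J \<Otimes>\<^sub>M Px) (\<lambda>(x, y). (x, y t))"
    by (rule pair_measure_distr) (use t d Px.sigma_finite_measure in auto)
  then show ?thesis using d by (simp add: case_prod_beta')
qed

lemma main:
  fixes J :: "'a measure" and Px :: "'x measure" and c :: "'a \<Rightarrow> 'x \<Rightarrow> bool"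
  assumes J: "prob_space J" and Px: "prob_space Px"
    and S: "{p \<in> space (J \<Otimes>\<^sub>M Px). c (fst p) (snd p)} \<in> sets (J \<Otimes>\<^sub>M Px)"
    and n_pos: "n \<ge> 1" and T_pos: "\<And>i. i < n \<Longrightarrow> T i \<ge> 1"
    and \<gamma>: "0 < \<gamma>" "\<gamma> \<le> 1/2"
  shows "measure (sample_space n T J Px)
           {\<omega> \<in> space (sample_space n T J Px).
              coverage J Px c \<ge> emp_avg n T c \<omega> - conf_bound n T \<gamma>} \<ge> 1 - 2 * \<gamma>"
proof -
  define M where "M = (\<lambda>i. J \<Otimes>\<^sub>M (\<Pi>\<^sub>M t\<in>{..<T i}. Px))"
  define \<Omega> where "\<Omega> = sample_space n T J Px"
  have \<Omega>_eq: "\<Omega> = (\<Pi>\<^sub>M i\<in>{..<n}. M i)" unfolding \<Omega>_def M_def sample_space_def ..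
  define S where "S = {p \<in> space (J \<Otimes>\<^sub>M Px). c (fst p) (snd p)}"
  define C where "C = coverage J Px c"
  have C_eq: "C = measure (J \<Otimes>\<^sub>M Px) S" unfolding C_def S_def coverage_def ..
  interpret J: prob_space J by fact
  interpret Px: prob_space Px by fact
  interpret JPx: prob_space "J \<Otimes>\<^sub>M Px" by (intro prob_space_pair J Px)
  have Mprob: "prob_space (M i)" for i unfolding M_def
    by (intro prob_space_pair J prob_space_PiM Px)
  interpret prob_space \<Omega> unfolding \<Omega>_eq by (intro prob_space_PiM Mprob)
  have cm: "(\<lambda>p. of_bool (c (fst p) (snd p)) :: real) \<in> borel_measurable (J \<Otimes>\<^sub>M Px)"
  proof -
    have "(\<lambda>p. indicator S p :: real) \<in> borel_measurable (J \<Otimes>\<^sub>M Px)"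
      using S unfolding S_def by (rule borel_measurable_indicator)
    then show ?thesis by (rule measurable_cong[THEN iffD1, rotated]) (auto simp: S_def indicator_def)
  qed
  define h where "h = (\<lambda>i p. (1 / real (T i)) * (\<Sum>t<T i. (of_bool (c (fst p) (snd p t)) :: real)))"
  have gm: "(\<lambda>p. (fst p, snd p t)) \<in> M i \<rightarrow>\<^sub>M J \<Otimes>\<^sub>M Px" if "t < T i" for i t
    unfolding M_def using that by (measurable; simp)
  have hm: "h i \<in> borel_measurable (M i)" for i
    unfolding h_def
    by (intro borel_measurable_times borel_measurable_const borel_measurable_sum
          measurable_compose[OF gm cm, simplified]) auto
  define Z where "Z = (\<lambda>i \<omega>. h i (\<omega> i))"
  have hb: "0 \<le> h i p \<and> h i p \<le> 1" if "i < n" for i p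
  proof -
    have "(\<Sum>t<T i. (of_bool (c (fst p) (snd p t)) :: real)) \<le> (\<Sum>t<T i. 1)"
      by (intro sum_mono) auto
    then have "(\<Sum>t<T i. (of_bool (c (fst p) (snd p t)) :: real)) \<le> real (T i)" by simp
    moreover have "(\<Sum>t<T i. (of_bool (c (fst p) (snd p t)) :: real)) \<ge> 0" by (intro sum_nonneg) auto
    moreover have "real (T i) \<ge> 1" using T_pos[OF that] by simp
    ultimately show ?thesis unfolding h_def by (auto simp: field_simps)
  qed
  have indep0: "indep_vars M (\<lambda>i \<omega>. \<omega> i) {..<n}"
  proof (subst indep_vars_iff_distr_eq_PiM')
    show "{..<n} \<noteq> {}" using n_pos by (metis lessThan_iff less_le_trans zero_less_one empty_iff)
    show "random_variable (M i) (\<lambda>\<omega>. \<omega> i)" if "i \<in> {..<n}" for i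
      using that unfolding \<Omega>_eq by measurable
    have "distr \<Omega> (\<Pi>\<^sub>M i\<in>{..<n}. M i) (\<lambda>x. \<lambda>i\<in>{..<n}. x i) = distr \<Omega> \<Omega> (\<lambda>x. x)"
      by (rule distr_cong) (auto simp: \<Omega>_eq space_PiM)
    also have "\<dots> = \<Omega>" by simp
    also have "\<dots> = (\<Pi>\<^sub>M i\<in>{..<n}. distr \<Omega> (M i) (\<lambda>\<omega>. \<omega> i))"
      unfolding \<Omega>_eq by (intro PiM_cong refl distr_PiM_component[symmetric] Mprob) auto
    finally show "distr \<Omega> (\<Pi>\<^sub>M i\<in>{..<n}. M i) (\<lambda>x. \<lambda>i\<in>{..<n}. x i) = (\<Pi>\<^sub>M i\<in>{..<n}. distr \<Omega> (M i) (\<lambda>\<omega>. \<omega> i))" .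
  qed
  have indep: "indep_vars (\<lambda>_. borel) Z {..<n}"
    unfolding Z_def by (rule indep_vars_compose2[OF indep0 hm])
  have EZ: "expectation (Z i) = C" if i: "i < n" for i
  proof -
    have "expectation (Z i) = integral\<^sup>L (distr \<Omega> (M i) (\<lambda>\<omega>. \<omega> i)) (h i)"
      unfolding Z_def by (rule integral_distr[symmetric]) (use i in \<open>auto simp: \<Omega>_eq hm\<close>)
    also have "distr \<Omega> (M i) (\<lambda>\<omega>. \<omega> i) = M i"
      unfolding \<Omega>_eq by (rule distr_PiM_component) (use i Mprob in auto)
    also have "integral\<^sup>L (M i) (h i) = (1 / real (T i)) * (\<Sum>t<T i. integral\<^sup>L (M i) (\<lambda>p. (of_bool (c (fst p) (snd p t)) :: real)))"
    proof -
      interpret Mi: prob_space "M i" by (rule Mprob)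
      have int: "integrable (M i) (\<lambda>p. (of_bool (c (fst p) (snd p t)) :: real))" if "t \<in> {..<T i}" for t
        by (rule Mi.integrable_const_bound[where B=1])
           (use that in \<open>auto intro: measurable_compose[OF gm cm, simplified]\<close>)
      show ?thesis unfolding h_def integral_mult_right_zero
        by (subst Bochner_Integration.integral_sum[OF int]) auto
    qed
    also have "\<dots> = (1 / real (T i)) * (\<Sum>t<T i. C)"
    proof -
      have "integral\<^sup>L (M i) (\<lambda>p. (of_bool (c (fst p) (snd p t)) :: real)) = C" if t: "t < T i" for t
      proof -
        have "integral\<^sup>L (M i) (\<lambda>p. (of_bool (c (fst p) (snd p t)) :: real))
            = integral\<^sup>L (distr (M i) (J \<Otimes>\<^sub>M Px) (\<lambda>p. (fst p, snd p t))) (\<lambda>p. of_bool (c (fst p) (snd p)))"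
          by (rule integral_distr[symmetric, OF gm[OF t] cm, simplified])
        also have "distr (M i) (J \<Otimes>\<^sub>M Px) (\<lambda>p. (fst p, snd p t)) = J \<Otimes>\<^sub>M Px"
          unfolding M_def by (rule comp_distr[OF J Px t])
        also have "integral\<^sup>L (J \<Otimes>\<^sub>M Px) (\<lambda>p. of_bool (c (fst p) (snd p))) = integral\<^sup>L (J \<Otimes>\<^sub>M Px) (indicator S)"
          by (rule Bochner_Integration.integral_cong) (auto simp: S_def indicator_def)
        also have "\<dots> = C" using S by (simp add: C_eq S_def Int_absorb2 sets.sets_into_space)
        finally show ?thesis .
      qed
      then show ?thesis by simp
    qed
    also have "\<dots> = C" using T_pos[OF i] by simp
    finally show ?thesis .
  qed
  have Zm: "Z i \<in> borel_measurable \<Omega>" if "i < n" for i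
    unfolding Z_def \<Omega>_eq using that by (intro measurable_compose[OF _ hm]) auto
  have sm[measurable]: "(\<lambda>\<omega>. \<Sum>i<n. Z i \<omega>) \<in> borel_measurable \<Omega>"
    by (intro borel_measurable_sum) (auto intro: Zm)
  interpret H: Hoeffding_ineq \<Omega> "{..<n}" Z "\<lambda>_. 0" "\<lambda>_. 1" "\<Sum>i\<in>{..<n}. expectation (Z i)"
  proof unfold_locales
    show "finite {..<n}" by simp
    show "indep_vars (\<lambda>_. borel) Z {..<n}" by (rule indep)
    show "AE x in \<Omega>. Z i x \<in> {0..1}" if "i \<in> {..<n}" for i
      using hb that by (auto simp: Z_def)
  qed simp
  have mu: "(\<Sum>i\<in>{..<n}. expectation (Z i)) = real n * C" using EZ by simp
  define e where "e = sqrt (ln (2 / \<gamma>) / (2 * real n))"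
  have n0: "real n > 0" using n_pos by simp
  have ln0: "ln (2 / \<gamma>) \<ge> 0" using \<gamma> by (auto simp: field_simps)
  have e0: "e \<ge> 0" unfolding e_def using ln0 n0 by simp
  have e2: "e\<^sup>2 = ln (2 / \<gamma>) / (2 * real n)" unfolding e_def using ln0 n0 by simp
  define B where "B = {x\<in>space \<Omega>. (\<Sum>i\<in>{..<n}. Z i x) \<ge> real n * C + real n * e}"
  have "prob B \<le> exp (-2 * (real n * e)\<^sup>2 / (\<Sum>i\<in>{..<n}. (1 - 0)\<^sup>2))"
    unfolding B_def using H.Hoeffding_ineq_ge[of "real n * e"] e0 n0 mu by simp
  also have "-2 * (real n * e)\<^sup>2 / (\<Sum>i\<in>{..<n}. (1 - 0)\<^sup>2) = - ln (2 / \<gamma>)"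
  proof -
    have "e * e = ln (2 / \<gamma>) / (2 * real n)" using e2 by (simp add: power2_eq_square)
    then show ?thesis using n0 by (simp add: power2_eq_square field_simps)
  qed
  also have "exp (- ln (2 / \<gamma>)) = \<gamma> / 2" using \<gamma> by (simp add: exp_minus)
  finally have PB: "prob B \<le> \<gamma> / 2" .
  define A where "A = {\<omega> \<in> space \<Omega>. C \<ge> emp_avg n T c \<omega> - conf_bound n T \<gamma>}"
  have emp: "emp_avg n T c \<omega> = (\<Sum>i<n. Z i \<omega>) / real n" for \<omega>
    unfolding emp_avg_def Z_def h_def by simp
  have conf: "conf_bound n T \<gamma> \<ge> e"
  proof -
    have "(\<Sum>i<n. 1 / real (T i)) \<ge> 0" by (intro sum_nonneg) auto
    then have "sqrt (ln (2 / \<gamma>) * (\<Sum>i<n. 1 / real (T i)) / (2 * (real n)\<^sup>2)) \<ge> 0"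
      using ln0 by simp
    then show ?thesis unfolding conf_bound_def e_def by simp
  qed
  have Aev: "A \<in> sets \<Omega>" unfolding A_def emp by measurable
  have Bev: "B \<in> sets \<Omega>" unfolding B_def by measurable
  have sub: "space \<Omega> - B \<subseteq> A"
  proof
    fix \<omega> assume w: "\<omega> \<in> space \<Omega> - B"
    then have "(\<Sum>i<n. Z i \<omega>) < real n * C + real n * e" unfolding B_def by auto
    then have "(\<Sum>i<n. Z i \<omega>) / real n < C + e" using n0 by (simp add: field_simps)
    then show "\<omega> \<in> A" using w conf unfolding A_def emp by auto
  qed
  have "1 - 2 * \<gamma> \<le> 1 - prob B" using PB \<gamma> by simp
  also have "\<dots> = prob (space \<Omega> - B)" using prob_compl[OF Bev] by simp
  also have "\<dots> \<le> prob A" by (rule finite_measure_mono[OF sub Aev])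
  finally show ?thesis unfolding A_def C_def \<Omega>_def .
qed



theorem lemma4:
  fixes Pf :: "(real^'n \<Rightarrow> real) measure"
    and Pd :: "(real^'n \<Rightarrow> real) \<Rightarrow> 'n dataset measure"
    and Dm :: "'n dataset measure"
    and Px :: "(real^'n) measure"
    and Xset :: "(real^'n) set"
    and m :: "real^'n \<Rightarrow> real"
    and k :: "real^'n \<Rightarrow> real^'n \<Rightarrow> real"
    and q :: real
    and alg :: "(real^'n \<Rightarrow> real) \<Rightarrow> (real^'n \<Rightarrow> real^'n \<Rightarrow> real) \<Rightarrow> 'n dataset
                 \<Rightarrow> (real^'n \<Rightarrow> real) \<times> (real^'n \<Rightarrow> real)"
    and n :: nat and T :: "nat \<Rightarrow> nat" and \<gamma> :: real
  assumes Pf: "prob_space Pf"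
    and Pd_kernel: "Pd \<in> Pf \<rightarrow>\<^sub>M subprob_algebra Dm"
    and Pd_prob: "\<And>f. f \<in> space Pf \<Longrightarrow> prob_space (Pd f)"
    and noiseless: "\<And>f. f \<in> space Pf \<Longrightarrow> AE D in Pd f. \<forall>(x, y) \<in> set D. y = f x"
    and Px: "prob_space Px" and Px_borel: "sets Px = sets borel"
    and Xset: "Xset \<in> sets borel" and Px_on_X: "emeasure Px Xset = 1"
    and k_psd: "psd_kernel k" and k_pos: "\<And>x y. k x y > 0"
    and q_pos: "q > 0"
    and c1_meas: "{p \<in> space (joint_law Pf Pd Dm \<Otimes>\<^sub>M Px). c1 m k q (fst p) (snd p)}
                    \<in> sets (joint_law Pf Pd Dm \<Otimes>\<^sub>M Px)"
    and c2_meas: "{p \<in> space (joint_law Pf Pd Dm \<Otimes>\<^sub>M Px). c2 alg m k q (fst p) (snd p)}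
                    \<in> sets (joint_law Pf Pd Dm \<Otimes>\<^sub>M Px)"
    and n_pos: "n \<ge> 1" and T_pos: "\<And>i. i < n \<Longrightarrow> T i \<ge> 1"
    and \<gamma>: "0 < \<gamma>" "\<gamma> \<le> 1/2"
  shows "(measure (sample_space n T (joint_law Pf Pd Dm) Px)
           {\<omega> \<in> space (sample_space n T (joint_law Pf Pd Dm) Px).
              coverage (joint_law Pf Pd Dm) Px (c1 m k q)
                \<ge> emp_avg n T (c1 m k q) \<omega> - conf_bound n T \<gamma>} \<ge> 1 - 2 * \<gamma>) \<and>
         (measure (sample_space n T (joint_law Pf Pd Dm) Px)
           {\<omega> \<in> space (sample_space n T (joint_law Pf Pd Dm) Px).
              coverage (joint_law Pf Pd Dm) Px (c2 alg m k q)
                \<ge> emp_avg n T (c2 alg m k q) \<omega> - conf_bound n T \<gamma>} \<ge> 1 - 2 * \<gamma>)"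
  proof
  have J: "prob_space (joint_law Pf Pd Dm)" by (rule joint_prob[OF Pf Pd_kernel Pd_prob])
  show "measure (sample_space n T (joint_law Pf Pd Dm) Px)
           {\<omega> \<in> space (sample_space n T (joint_law Pf Pd Dm) Px).
              coverage (joint_law Pf Pd Dm) Px (c1 m k q)
                \<ge> emp_avg n T (c1 m k q) \<omega> - conf_bound n T \<gamma>} \<ge> 1 - 2 * \<gamma>"
    by (rule main[OF J Px c1_meas n_pos T_pos \<gamma>])
  show "measure (sample_space n T (joint_law Pf Pd Dm) Px)
           {\<omega> \<in> space (sample_space n T (joint_law Pf Pd Dm) Px).
              coverage (joint_law Pf Pd Dm) Px (c2 alg m k q)
                \<ge> emp_avg n T (c2 alg m k q) \<omega> - conf_bound n T \<gamma>} \<ge> 1 - 2 * \<gamma>"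
    by (rule main[OF J Px c2_meas n_pos T_pos \<gamma>])
qed

end
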